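(* Let $T_1,T_2$ be tables joined on column $J$ with frequencies $a_v,b_v$ ($v\in\mathcal U$) such that $\gamma_{1,1}=\sum_v a_vb_v>0$, and let $\epsilon_1,\epsilon_2\in(0,1]$. Among all UBS parameters $(p_1,q_1),(p_2,q_2)\in(0,1]^2$ with $p_1q_1=\epsilon_1$ and $p_2q_2=\epsilon_2$, the variance of $\hat J_{\mathrm{count}}=\frac{1}{\min\{p_1,p_2\}q_1q_2}|S_1\bowtie_J S_2|$ (with $S_i=\mathrm{UBS}_{p_i,q_i}(T_i,J)$) is minimized by $$p_1=p_2=p:=\min\Big\{1,\max\Big\{\epsilon_1,\epsilon_2,\sqrt{\frac{\epsilon_1\epsilon_2(\gamma_{2,2}-\gamma_{1,2}-\gamma_{2,1}+\gamma_{1,1})}{\gamma_{1,1}}}\Big\}\Big\},\qquad q_1=\epsilon_1/p,\ q_2=\epsilon_2/p,$$ where $\gamma_{i,j}=\sum_{v\in\mathcal U}a_v^ib_v^j$.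
   Context: $T_1,T_2$ are finite multisets of tuples with a join attribute $J$ taking values in a finite set $\mathcal U$; $a_v$ (resp. $b_v$) is the number of tuples of $T_1$ (resp. $T_2$) with $J$-value $v$. $S_1\bowtie_J S_2$ is the set of pairs $(t_1,t_2)\in S_1\times S_2$ with $t_1.J=t_2.J$. $\mathrm{UBS}_{p,q}(T,J)$: given a hash function $h:\mathcal U\to[0,1]$, each tuple $t\in T$ with $h(t.J)<p$ is included independently with probability $q$; others are excluded. The values $h(v)$ are independent uniform on $[0,1]$, the same $h$ is used for both tables, and the Bernoulli coins are independent across all tuples and independent of $h$. *)

theory Defs
  imports "HOL-Probability.Probability"
begin

text \<open>Tables are given by their join-value frequencies a, b :: 'u => nat over a finite
universe 'u.  The tuples of T1 with J-value v are indexed by (v,i) with i < a v,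
similarly for T2.\<close>

definition tuples :: "('u \<Rightarrow> nat) \<Rightarrow> ('u \<times> nat) set" where
  "tuples a = {(v, i). i < a v}"

definition gamma :: "('u::finite \<Rightarrow> nat) \<Rightarrow> ('u \<Rightarrow> nat) \<Rightarrow> nat \<Rightarrow> nat \<Rightarrow> real" where
  "gamma a b i j = (\<Sum>v\<in>UNIV. real (a v) ^ i * real (b v) ^ j)"

definition UBS :: "('u \<Rightarrow> nat) \<Rightarrow> real \<Rightarrow> ('u \<Rightarrow> real) \<Rightarrow> ('u \<times> nat \<Rightarrow> bool) \<Rightarrow> ('u \<times> nat) set" where
  "UBS a p h c = {t \<in> tuples a. h (fst t) < p \<and> c t}"

definition join :: "('u \<times> nat) set \<Rightarrow> ('u \<times> nat) set \<Rightarrow> (('u \<times> nat) \<times> ('u \<times> nat)) set" where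
  "join S1 S2 = {(t1, t2) \<in> S1 \<times> S2. fst t1 = fst t2}"

text \<open>Joint probability space: independent uniform hash values on [0,1] (shared by both
tables), independent Bernoulli(q1) coins for the tuples of T1 and Bernoulli(q2) coins
for the tuples of T2.\<close>
definition ubs_space :: "('u::finite \<Rightarrow> nat) \<Rightarrow> ('u \<Rightarrow> nat) \<Rightarrow> real \<Rightarrow> real \<Rightarrow>
    (('u \<Rightarrow> real) \<times> ('u \<times> nat \<Rightarrow> bool) \<times> ('u \<times> nat \<Rightarrow> bool)) measure" where
  "ubs_space a b q1 q2 =
     (PiM UNIV (\<lambda>_. uniform_measure lborel {0..1::real}))
     \<Otimes>\<^sub>M ((PiM (tuples a) (\<lambda>_. measure_pmf (bernoulli_pmf q1)))
     \<Otimes>\<^sub>M (PiM (tuples b) (\<lambda>_. measure_pmf (bernoulli_pmf q2))))"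

definition J_count :: "('u \<Rightarrow> nat) \<Rightarrow> ('u \<Rightarrow> nat) \<Rightarrow> real \<Rightarrow> real \<Rightarrow> real \<Rightarrow> real \<Rightarrow>
    (('u \<Rightarrow> real) \<times> ('u \<times> nat \<Rightarrow> bool) \<times> ('u \<times> nat \<Rightarrow> bool)) \<Rightarrow> real" where
  "J_count a b p1 q1 p2 q2 \<omega> =
     (case \<omega> of (h, c1, c2) \<Rightarrow>
        real (card (join (UBS a p1 h c1) (UBS b p2 h c2))) / (min p1 p2 * q1 * q2))"

definition var_J_count :: "('u::finite \<Rightarrow> nat) \<Rightarrow> ('u \<Rightarrow> nat) \<Rightarrow> real \<Rightarrow> real \<Rightarrow> real \<Rightarrow> real \<Rightarrow> real" where
  "var_J_count a b p1 q1 p2 q2 =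
     prob_space.variance (ubs_space a b q1 q2) (J_count a b p1 q1 p2 q2)"

end

theory Submission
  imports Defs
begin

abbreviation "U \<equiv> uniform_measure lborel {0..1::real}"

lemma intU: assumes "0 < m" "m \<le> 1" shows "(\<integral>x. (of_bool (x < m)::real) \<partial>U) = m"
proof -
  have "(\<lambda>x. (of_bool (x < m)::real)) = indicator {..<m}" by (auto simp: indicator_def)
  moreover have "{0..1} \<inter> {..<m} = {0..<m::real}" using assms by auto
  ultimately show ?thesis using assms by (simp add: measure_def divide_ennreal_def)
qed

lemma intB: assumes "0 \<le> q" "q \<le> 1"
  shows "(\<integral>x. f x \<partial>measure_pmf (bernoulli_pmf q)) = q * f True + (1 - q) * (f False::real)"
  using assms by (subst integral_measure_pmf_real[where A=UNIV]) (auto simp: UNIV_bool)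

lemma bint:
  fixes g :: "'b \<Rightarrow> real"
  assumes "prob_space N" "g \<in> borel_measurable N" "\<And>x. \<bar>g x\<bar> \<le> B"
  shows "integrable N g"
proof -
  interpret prob_space N by fact
  show ?thesis using assms by (intro integrable_const_bound[where B=B]) auto
qed

lemma PiM_two:
  fixes N :: "'b measure" and g :: "'b \<Rightarrow> real"
  assumes N: "prob_space N" and I: "finite I" "sa \<in> I" "sb \<in> I"
    and g: "g \<in> borel_measurable N" "\<And>x. \<bar>g x\<bar> \<le> B"
  shows "(\<integral>\<omega>. g (\<omega> sa) * g (\<omega> sb) \<partial>PiM I (\<lambda>_. N)) =
          (if sa = sb then (\<integral>x. g x * g x \<partial>N) else (\<integral>x. g x \<partial>N)^2)"
proof -
  interpret P: product_prob_space "\<lambda>_. N" I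
    using N by (simp add: product_prob_space_def product_sigma_finite_def prob_space_imp_sigma_finite
        product_prob_space_axioms_def)
  have gg: "\<bar>g x * g x\<bar> \<le> B * B" for x
  proof -
    have "\<bar>g x\<bar> \<le> B" by (rule g(2))
    hence "\<bar>g x\<bar> * \<bar>g x\<bar> \<le> B * B" by (intro mult_mono) auto
    thus ?thesis by (simp add: abs_mult)
  qed
  have ig: "integrable N g" by (rule bint[OF N g])
  have mgg: "(\<lambda>x. g x * g x) \<in> borel_measurable N" using g(1) by measurable
  have igg: "integrable N (\<lambda>x. g x * g x)" by (rule bint[OF N mgg gg])
  have i1: "integrable N (\<lambda>_. 1::real)" by (rule bint[OF N, of _ 1]) auto
  show ?thesis
  proof (cases "sa = sb")
    case True
    define f where "f = (\<lambda>t x. if t = sa then g x * g x else 1)"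
    have "(\<integral>\<omega>. g (\<omega> sa) * g (\<omega> sb) \<partial>PiM I (\<lambda>_. N)) = (\<integral>\<omega>. (\<Prod>t\<in>I. f t (\<omega> t)) \<partial>PiM I (\<lambda>_. N))"
      using True I by (simp add: f_def prod.delta)
    also have "\<dots> = (\<Prod>t\<in>I. integral\<^sup>L N (f t))"
    proof (rule P.product_integral_prod[OF I(1)])
      fix t
      have "f t = (if t = sa then (\<lambda>x. g x * g x) else (\<lambda>_. 1))" by (simp add: f_def fun_eq_iff)
      thus "integrable N (f t)" using igg i1 by simp
    qed
    also have "\<dots> = (\<Prod>t\<in>I. if t = sa then (\<integral>x. g x * g x \<partial>N) else 1)"
      by (rule prod.cong) (simp_all add: f_def prob_space.prob_space[OF N])
    finally show ?thesis using True I by (simp add: prod.delta)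
  next
    case False
    define f where "f = (\<lambda>t x. (if t = sa then g x else 1) * (if t = sb then g x else 1))"
    have "(\<integral>\<omega>. g (\<omega> sa) * g (\<omega> sb) \<partial>PiM I (\<lambda>_. N)) = (\<integral>\<omega>. (\<Prod>t\<in>I. f t (\<omega> t)) \<partial>PiM I (\<lambda>_. N))"
      using False I by (simp add: f_def prod.delta prod.distrib)
    also have "\<dots> = (\<Prod>t\<in>I. integral\<^sup>L N (f t))"
    proof (rule P.product_integral_prod[OF I(1)])
      fix t
      have "f t = (if t = sa \<or> t = sb then g else (\<lambda>_. 1))" using False by (auto simp: f_def fun_eq_iff)
      thus "integrable N (f t)" using ig i1 by simp
    qed
    also have "\<dots> = (\<Prod>t\<in>I. (if t = sa then (\<integral>x. g x \<partial>N) else 1) * (if t = sb then (\<integral>x. g x \<partial>N) else 1))"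
    proof (rule prod.cong)
      fix t
      have "f t = (if t = sa \<or> t = sb then g else (\<lambda>_. 1))" using False by (auto simp: f_def fun_eq_iff)
      thus "integral\<^sup>L N (f t) = (if t = sa then (\<integral>x. g x \<partial>N) else 1) * (if t = sb then (\<integral>x. g x \<partial>N) else 1)"
        using False by (simp add: prob_space.prob_space[OF N])
    qed simp
    finally show ?thesis using False I by (simp add: prod.delta prod.distrib power2_eq_square)
  qed
qed


lemma pair_int:
  fixes f :: "'a \<Rightarrow> real" and g :: "'b \<Rightarrow> real"
  assumes A: "prob_space A" and B: "prob_space B"
    and f: "f \<in> borel_measurable A" "\<And>x. \<bar>f x\<bar> \<le> Bf"
    and g: "g \<in> borel_measurable B" "\<And>y. \<bar>g y\<bar> \<le> Bg"
  shows "integrable (A \<Otimes>\<^sub>M B) (\<lambda>\<omega>. f (fst \<omega>) * g (snd \<omega>))"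
    and "(\<integral>\<omega>. f (fst \<omega>) * g (snd \<omega>) \<partial>(A \<Otimes>\<^sub>M B)) = (\<integral>x. f x \<partial>A) * (\<integral>y. g y \<partial>B)"
proof -
  interpret pair_sigma_finite A B
    using A B by (simp add: pair_sigma_finite_def prob_space_imp_sigma_finite)
  have m: "(\<lambda>\<omega>. f (fst \<omega>) * g (snd \<omega>)) \<in> borel_measurable (A \<Otimes>\<^sub>M B)" using f(1) g(1) by measurable
  have bd: "\<bar>f (fst \<omega>) * g (snd \<omega>)\<bar> \<le> Bf * Bg" for \<omega>
  proof -
    have "\<bar>f (fst \<omega>)\<bar> * \<bar>g (snd \<omega>)\<bar> \<le> Bf * Bg"
      using f(2) g(2) by (intro mult_mono) (auto intro: order_trans[OF abs_ge_zero])
    thus ?thesis by (simp add: abs_mult)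
  qed
  show i: "integrable (A \<Otimes>\<^sub>M B) (\<lambda>\<omega>. f (fst \<omega>) * g (snd \<omega>))"
    by (rule bint[OF prob_space_pair[OF A B] m bd])
  have "(\<integral>\<omega>. f (fst \<omega>) * g (snd \<omega>) \<partial>(A \<Otimes>\<^sub>M B)) = (\<integral>x. (\<integral>y. f x * g y \<partial>B) \<partial>A)"
    using integral_fst'[OF i] by simp
  also have "\<dots> = (\<integral>x. f x * (\<integral>y. g y \<partial>B) \<partial>A)" by simp
  also have "\<dots> = (\<integral>x. f x \<partial>A) * (\<integral>y. g y \<partial>B)" by simp
  finally show "(\<integral>\<omega>. f (fst \<omega>) * g (snd \<omega>) \<partial>(A \<Otimes>\<^sub>M B)) = (\<integral>x. f x \<partial>A) * (\<integral>y. g y \<partial>B)" .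
qed

lemma triple_int:
  fixes f :: "'a \<Rightarrow> real" and g :: "'b \<Rightarrow> real" and k :: "'c \<Rightarrow> real"
  assumes A: "prob_space A" and B: "prob_space B" and C: "prob_space C"
    and f: "f \<in> borel_measurable A" "\<And>x. \<bar>f x\<bar> \<le> Bf"
    and g: "g \<in> borel_measurable B" "\<And>y. \<bar>g y\<bar> \<le> Bg"
    and k: "k \<in> borel_measurable C" "\<And>y. \<bar>k y\<bar> \<le> Bk"
  shows "integrable (A \<Otimes>\<^sub>M (B \<Otimes>\<^sub>M C)) (\<lambda>\<omega>. f (fst \<omega>) * (g (fst (snd \<omega>)) * k (snd (snd \<omega>))))"
    and "(\<integral>\<omega>. f (fst \<omega>) * (g (fst (snd \<omega>)) * k (snd (snd \<omega>))) \<partial>(A \<Otimes>\<^sub>M (B \<Otimes>\<^sub>M C)))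
          = (\<integral>x. f x \<partial>A) * ((\<integral>y. g y \<partial>B) * (\<integral>z. k z \<partial>C))"
proof -
  define gk where "gk = (\<lambda>y. g (fst y) * k (snd y))"
  have m: "gk \<in> borel_measurable (B \<Otimes>\<^sub>M C)" unfolding gk_def using g(1) k(1) by measurable
  have bd: "\<bar>gk y\<bar> \<le> Bg * Bk" for y
  proof -
    have "\<bar>g (fst y)\<bar> * \<bar>k (snd y)\<bar> \<le> Bg * Bk"
      using g(2) k(2) by (intro mult_mono) (auto intro: order_trans[OF abs_ge_zero])
    thus ?thesis by (simp add: abs_mult gk_def)
  qed
  have e: "(\<integral>y. gk y \<partial>(B \<Otimes>\<^sub>M C)) = (\<integral>y. g y \<partial>B) * (\<integral>z. k z \<partial>C)"
    unfolding gk_def by (rule pair_int(2)[OF B C g k])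
  note r = pair_int[OF A prob_space_pair[OF B C] f m bd]
  show "integrable (A \<Otimes>\<^sub>M (B \<Otimes>\<^sub>M C)) (\<lambda>\<omega>. f (fst \<omega>) * (g (fst (snd \<omega>)) * k (snd (snd \<omega>))))"
    using r(1) unfolding gk_def .
  show "(\<integral>\<omega>. f (fst \<omega>) * (g (fst (snd \<omega>)) * k (snd (snd \<omega>))) \<partial>(A \<Otimes>\<^sub>M (B \<Otimes>\<^sub>M C)))
          = (\<integral>x. f x \<partial>A) * ((\<integral>y. g y \<partial>B) * (\<integral>z. k z \<partial>C))"
    using r(2) unfolding e unfolding gk_def .
qed

lemma probU: "prob_space U"
  by (rule prob_space_uniform_measure) auto

abbreviation "MH \<equiv> PiM (UNIV::'u::finite set) (\<lambda>_. U)"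
abbreviation "MB a q \<equiv> PiM (tuples a) (\<lambda>_. measure_pmf (bernoulli_pmf q))"

lemma probMH: "prob_space MH" by (rule prob_space_PiM) (rule probU)
lemma probMB: "prob_space (MB a q)" by (rule prob_space_PiM) (rule prob_space_measure_pmf)

lemma finite_tuples: "finite (tuples (a :: 'u::finite \<Rightarrow> nat))"
proof -
  have "tuples a = Sigma UNIV (\<lambda>v. {..<a v})" by (auto simp: tuples_def)
  thus ?thesis by simp
qed

lemma meas_U: "(\<lambda>x. of_bool (x < m) :: real) \<in> borel_measurable U"
  by measurable

lemma obb: "(of_bool P :: real) * of_bool P = of_bool P" by (cases P) simp_all

lemma EH: assumes "0 < m" "m \<le> 1"
  shows "(\<integral>h. of_bool (h v < m) * of_bool (h w < m) \<partial>(MH :: ('u::finite \<Rightarrow> real) measure))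
     = (if v = w then m else m\<^sup>2)"
proof -
  have "(\<integral>x. (of_bool (x < m)::real) * of_bool (x < m) \<partial>U) = m"
    using intU[OF assms] by (simp add: obb)
  thus ?thesis using PiM_two[where sa=v and sb=w and g="\<lambda>x. of_bool (x < m)" and B=1, OF probU finite_class.finite_UNIV] meas_U intU[OF assms]
    by simp
qed

lemma meas_B: "(\<lambda>x. of_bool x :: real) \<in> borel_measurable (measure_pmf (bernoulli_pmf q))"
  by simp

lemma EB2: fixes a :: "'u::finite \<Rightarrow> nat" assumes "0 \<le> q" "q \<le> 1" "s1 \<in> tuples a" "s2 \<in> tuples a"
  shows "(\<integral>c. of_bool (c s1) * of_bool (c s2) \<partial>MB a q) = (if s1 = s2 then q else q\<^sup>2 :: real)"
  using PiM_two[where g="\<lambda>x. of_bool x" and B=1 and N="measure_pmf (bernoulli_pmf q)", OF prob_space_measure_pmf finite_tuples assms(3,4)]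
    intB[OF assms(1,2)] by (simp add: obb)


definition CA :: "('u \<Rightarrow> nat) \<Rightarrow> 'u \<Rightarrow> ('u \<times> nat \<Rightarrow> bool) \<Rightarrow> real" where
  "CA a v c = (\<Sum>i<a v. of_bool (c (v,i)))"

lemma meas_comp:
  fixes a :: "'u::finite \<Rightarrow> nat"
  assumes "s \<in> tuples a"
  shows "(\<lambda>c. of_bool (c s) :: real) \<in> borel_measurable (MB a q)"
  by (rule measurable_compose[OF measurable_component_singleton[OF assms] meas_B])

lemma meas_CA:
  fixes a :: "'u::finite \<Rightarrow> nat"
  shows "CA a v \<in> borel_measurable (MB a q)"
proof -
  have "(\<lambda>c. \<Sum>i<a v. (of_bool (c (v,i)) :: real)) \<in> borel_measurable (MB a q)"
    by (rule borel_measurable_sum) (rule meas_comp, simp add: tuples_def)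
  thus ?thesis unfolding CA_def[abs_def] .
qed

lemma bd_CA: "\<bar>CA a v c\<bar> \<le> real (a v)"
proof -
  have "0 \<le> CA a v c" unfolding CA_def by (rule sum_nonneg) simp
  moreover have "CA a v c \<le> (\<Sum>i<a v. 1)" unfolding CA_def by (rule sum_mono) simp
  ultimately show ?thesis by simp
qed

lemma card_CA: "real (card {i. i < a v \<and> c (v,i)}) = CA a v c"
proof -
  have e: "{i. i < a v \<and> c (v,i)} = {i \<in> {..<a v}. c (v,i)}" by auto
  have "real (card {i. i < a v \<and> c (v,i)}) = (\<Sum>i\<in>{i \<in> {..<a v}. c (v,i)}. 1)"
    unfolding e by (rule real_of_card)
  also have "\<dots> = (\<Sum>i<a v. if c (v,i) then 1 else 0)" by (rule sum.inter_filter) simp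
  finally show ?thesis unfolding CA_def by (simp add: of_bool_def)
qed

lemma dsum: "(\<Sum>i<n. \<Sum>j<n. (if i = j then x else y)) = real n * (real n * y + x - (y::real))"
proof -
  have "(\<Sum>j<n. (if i = j then x else y)) = real n * y + x - y" if "i < n" for i
  proof -
    have "(\<Sum>j<n. (if i = j then x else y)) = (\<Sum>j<n. y + (if i = j then x - y else 0))"
      by (rule sum.cong) auto
    also have "\<dots> = real n * y + (x - y)" using that by (simp add: sum.distrib)
    finally show ?thesis by simp
  qed
  hence "(\<Sum>i<n. \<Sum>j<n. (if i = j then x else y)) = (\<Sum>i<n. real n * y + x - y)"
    by (intro sum.cong) auto
  thus ?thesis by simp
qed

lemma int_prod_bool:
  fixes a :: "'u::finite \<Rightarrow> nat"
  assumes "s1 \<in> tuples a" "s2 \<in> tuples a"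
  shows "integrable (MB a q) (\<lambda>c. (of_bool (c s1) :: real) * of_bool (c s2))"
  by (rule bint[OF probMB borel_measurable_times[OF meas_comp[OF assms(1)] meas_comp[OF assms(2)]], of 1]) simp

lemma EC:
  fixes a :: "'u::finite \<Rightarrow> nat"
  assumes q: "0 \<le> q" "q \<le> 1"
  shows "(\<integral>c. CA a v c * CA a w c \<partial>MB a q) =
     (if v = w then real (a v) * (real (a v) * q\<^sup>2 + q - q\<^sup>2) else real (a v) * real (a w) * q\<^sup>2)"
proof -
  have tv: "(v,i) \<in> tuples a" if "i < a v" for i using that by (simp add: tuples_def)
  have tw: "(w,j) \<in> tuples a" if "j < a w" for j using that by (simp add: tuples_def)
  have "(\<lambda>c. CA a v c * CA a w c) = (\<lambda>c. \<Sum>i<a v. \<Sum>j<a w. of_bool (c (v,i)) * of_bool (c (w,j)))"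
    by (rule ext) (simp only: CA_def sum_product)
  hence "(\<integral>c. CA a v c * CA a w c \<partial>MB a q) =
      (\<integral>c. (\<Sum>i<a v. \<Sum>j<a w. of_bool (c (v,i)) * of_bool (c (w,j))) \<partial>MB a q)" by simp
  also have "\<dots> = (\<Sum>i<a v. \<integral>c. (\<Sum>j<a w. of_bool (c (v,i)) * of_bool (c (w,j))) \<partial>MB a q)"
    by (rule Bochner_Integration.integral_sum) (rule Bochner_Integration.integrable_sum, rule int_prod_bool; auto intro: tv tw)
  also have "\<dots> = (\<Sum>i<a v. \<Sum>j<a w. \<integral>c. of_bool (c (v,i)) * of_bool (c (w,j)) \<partial>MB a q)"
    by (rule sum.cong[OF refl], rule Bochner_Integration.integral_sum, rule int_prod_bool; auto intro: tv tw)
  also have "\<dots> = (\<Sum>i<a v. \<Sum>j<a w. if (v,i) = (w,j) then q else q\<^sup>2)"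
    by (rule sum.cong[OF refl], rule sum.cong[OF refl], rule EB2[OF q]; auto intro: tv tw)
  finally have *: "(\<integral>c. CA a v c * CA a w c \<partial>MB a q) = (\<Sum>i<a v. \<Sum>j<a w. if (v,i) = (w,j) then q else q\<^sup>2)" .
  show ?thesis
  proof (cases "v = w")
    case True
    thus ?thesis using * dsum[where n="a v" and x=q and y="q\<^sup>2"] by simp
  next
    case False
    thus ?thesis using * by simp
  qed
qed

lemma EC1:
  fixes a :: "'u::finite \<Rightarrow> nat"
  assumes q: "0 \<le> q" "q \<le> 1"
  shows "(\<integral>c. CA a v c \<partial>MB a q) = real (a v) * q"
proof -
  have tv: "(v,i) \<in> tuples a" if "i < a v" for i using that by (simp add: tuples_def)
  have "(\<lambda>c. CA a v c) = (\<lambda>c. \<Sum>i<a v. of_bool (c (v,i)) * of_bool (c (v,i)))"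
    by (rule ext) (simp only: CA_def obb)
  hence "(\<integral>c. CA a v c \<partial>MB a q) = (\<integral>c. (\<Sum>i<a v. of_bool (c (v,i)) * of_bool (c (v,i))) \<partial>MB a q)" by simp
  also have "\<dots> = (\<Sum>i<a v. \<integral>c. of_bool (c (v,i)) * of_bool (c (v,i)) \<partial>MB a q)"
    by (rule Bochner_Integration.integral_sum) (rule int_prod_bool; auto intro: tv)
  also have "\<dots> = (\<Sum>i<a v. q)"
    by (intro sum.cong refl) (simp add: EB2 q tv)
  finally show ?thesis by simp
qed

lemma meas_H:
  "(\<lambda>h. of_bool (h v < m) :: real) \<in> borel_measurable (MH :: ('u::finite \<Rightarrow> real) measure)"
  using measurable_compose[where f="\<lambda>h. h v" and g="\<lambda>x. of_bool (x < m) :: real", OF measurable_component_singleton[OF UNIV_I] meas_U] .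

lemma EH1:
  assumes "0 < m" "m \<le> 1"
  shows "(\<integral>h. of_bool (h v < m) \<partial>(MH :: ('u::finite \<Rightarrow> real) measure)) = m"
  using EH[OF assms, of v v] by (simp add: obb)


lemma card_join:
  fixes a b :: "'u::finite \<Rightarrow> nat"
  shows "card (join (UBS a p1 h c1) (UBS b p2 h c2)) = (\<Sum>v\<in>UNIV. (if h v < p1 \<and> h v < p2 then
     card {i. i < a v \<and> c1 (v,i)} * card {j. j < b v \<and> c2 (v,j)} else 0))"
proof -
  let ?S = "SIGMA v:{v. h v < p1 \<and> h v < p2}. {i. i < a v \<and> c1 (v,i)} \<times> {j. j < b v \<and> c2 (v,j)}"
  let ?f = "\<lambda>(v::'u,i::nat,j::nat). ((v,i),(v,j))"
  have eq: "join (UBS a p1 h c1) (UBS b p2 h c2) = ?f ` ?S"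
  proof
    show "?f ` ?S \<subseteq> join (UBS a p1 h c1) (UBS b p2 h c2)"
      by (auto simp: join_def UBS_def tuples_def)
    show "join (UBS a p1 h c1) (UBS b p2 h c2) \<subseteq> ?f ` ?S"
    proof
      fix x assume "x \<in> join (UBS a p1 h c1) (UBS b p2 h c2)"
      then obtain v i j where x: "x = ((v,i),(v,j))" and "(v,i,j) \<in> ?S"
        by (auto simp: join_def UBS_def tuples_def)
      thus "x \<in> ?f ` ?S" by force
    qed
  qed
  have inj: "inj_on ?f ?S" by (auto simp: inj_on_def)
  have fin: "finite {i. i < n \<and> P i}" for n :: nat and P by simp
  have "card (?f ` ?S) = card ?S" by (rule card_image[OF inj])
  also have "\<dots> = (\<Sum>v\<in>{v. h v < p1 \<and> h v < p2}. card ({i. i < a v \<and> c1 (v,i)} \<times> {j. j < b v \<and> c2 (v,j)}))"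
    by (rule card_SigmaI) auto
  also have "\<dots> = (\<Sum>v\<in>UNIV. (if h v < p1 \<and> h v < p2 then
     card {i. i < a v \<and> c1 (v,i)} * card {j. j < b v \<and> c2 (v,j)} else 0))"
    by (simp add: sum.If_cases card_cartesian_product Collect_conj_eq[symmetric])
  finally show ?thesis using eq by simp
qed

lemma J_eq:
  fixes a b :: "'u::finite \<Rightarrow> nat"
  shows "J_count a b p1 q1 p2 q2 = (\<lambda>\<omega>. (\<Sum>v\<in>UNIV. of_bool (fst \<omega> v < min p1 p2) *
            (CA a v (fst (snd \<omega>)) * CA b v (snd (snd \<omega>)))) / (min p1 p2 * q1 * q2))"
proof (rule ext)
  fix \<omega> :: "('u \<Rightarrow> real) \<times> ('u \<times> nat \<Rightarrow> bool) \<times> ('u \<times> nat \<Rightarrow> bool)"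
  obtain h c1 c2 where w: "\<omega> = (h, c1, c2)" by (cases \<omega>) auto
  have "real (card (join (UBS a p1 h c1) (UBS b p2 h c2))) =
      (\<Sum>v\<in>UNIV. of_bool (h v < min p1 p2) * (CA a v c1 * CA b v c2))"
    unfolding card_join of_nat_sum by (rule sum.cong) (auto simp: card_CA[symmetric])
  thus "J_count a b p1 q1 p2 q2 \<omega> = (\<Sum>v\<in>UNIV. of_bool (fst \<omega> v < min p1 p2) *
            (CA a v (fst (snd \<omega>)) * CA b v (snd (snd \<omega>)))) / (min p1 p2 * q1 * q2)"
    by (simp add: J_count_def w)
qed

lemma (in prob_space) variance_div:
  fixes X :: "'a \<Rightarrow> real"
  shows "variance (\<lambda>x. X x / c) = variance X / c\<^sup>2"
proof -
  have e: "expectation (\<lambda>x. X x / c) = expectation X / c" by (rule integral_divide_zero)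
  have "(\<lambda>x. (X x / c - expectation (\<lambda>x. X x / c))\<^sup>2) = (\<lambda>x. (X x - expectation X)\<^sup>2 / c\<^sup>2)"
    unfolding e by (simp add: fun_eq_iff power_divide diff_divide_distrib[symmetric])
  thus ?thesis by simp
qed

lemma sum_gamma:
  fixes a b :: "'u::finite \<Rightarrow> nat"
  shows "(\<Sum>v\<in>UNIV. (real (a v) * x + (real (a v))\<^sup>2 - real (a v)) * (real (b v) * y + (real (b v))\<^sup>2 - real (b v)))
    = gamma a b 1 1 * x * y + (gamma a b 1 2 - gamma a b 1 1) * x + (gamma a b 2 1 - gamma a b 1 1) * y
      + (gamma a b 2 2 - gamma a b 1 2 - gamma a b 2 1 + gamma a b 1 1)"
proof -
  have "(\<Sum>v\<in>UNIV. (real (a v) * x + (real (a v))\<^sup>2 - real (a v)) * (real (b v) * y + (real (b v))\<^sup>2 - real (b v)))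
     = (\<Sum>v\<in>UNIV. real (a v) * real (b v) * (x * y) + (real (a v) * (real (b v))\<^sup>2 * x - real (a v) * real (b v) * x)
          + ((real (a v))\<^sup>2 * real (b v) * y - real (a v) * real (b v) * y)
          + ((real (a v))\<^sup>2 * (real (b v))\<^sup>2 - real (a v) * (real (b v))\<^sup>2 - (real (a v))\<^sup>2 * real (b v) + real (a v) * real (b v)))"
    by (rule sum.cong) (simp_all add: algebra_simps power2_eq_square)
  also have "\<dots> = gamma a b 1 1 * (x * y) + (gamma a b 1 2 * x - gamma a b 1 1 * x) + (gamma a b 2 1 * y - gamma a b 1 1 * y)
      + (gamma a b 2 2 - gamma a b 1 2 - gamma a b 2 1 + gamma a b 1 1)"
    by (simp add: gamma_def sum.distrib sum_subtractf sum_distrib_right)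
  finally show ?thesis by (simp add: algebra_simps)
qed


lemma phi_min:
  fixes \<alpha> c E t :: real
  assumes a: "\<alpha> > 0" and c: "c \<ge> 0" and E: "0 < E" "E \<le> 1" and t: "E \<le> t" "t \<le> 1"
  shows "\<alpha> * min 1 (max E (sqrt (c/\<alpha>))) + c / min 1 (max E (sqrt (c/\<alpha>))) \<le> \<alpha> * t + c / t"
proof -
  define s where "s = sqrt (c/\<alpha>)"
  define p where "p = min 1 (max E s)"
  have s0: "s \<ge> 0" unfolding s_def using a c by simp
  have "s * s = c / \<alpha>" unfolding s_def using a c by (simp add: real_sqrt_mult_self)
  hence cs: "c = \<alpha> * (s * s)" using a by (simp add: field_simps)
  have p0: "p > 0" "t > 0" using E t unfolding p_def by auto
  have key: "(t - p) * (\<alpha> * t * p - c) \<ge> 0"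
  proof (cases "s \<le> E")
    case True
    hence pE: "p = E" unfolding p_def using E by simp
    have "s * s \<le> t * E" using True s0 t by (intro mult_mono) auto
    hence h: "\<alpha> * (s * s) \<le> \<alpha> * (t * E)" using a by simp
    have "c \<le> \<alpha> * t * p" using h by (simp only: pE cs mult.assoc)
    moreover have "t - p \<ge> 0" using pE t by simp
    ultimately show ?thesis by simp
  next
    case False
    show ?thesis
    proof (cases "s \<le> 1")
      case True
      hence ps: "p = s" unfolding p_def using False by simp
      have "(t - p) * (\<alpha> * t * p - c) = \<alpha> * s * (t - s)^2" using ps cs by (simp add: algebra_simps power2_eq_square)
      thus ?thesis using a s0 by simp
    next
      case F2: False
      hence p1: "p = 1" unfolding p_def by simp
      have "1 * 1 \<le> s * s" using F2 by (intro mult_mono) auto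
      hence "\<alpha> \<le> c" using cs a by simp
      moreover have "\<alpha> * t \<le> \<alpha>" using a t by (simp add: mult_left_le)
      ultimately have "\<alpha> * t * p - c \<le> 0" using p1 by simp
      moreover have "t - p \<le> 0" using p1 t by simp
      ultimately show ?thesis by (simp add: mult_nonpos_nonpos)
    qed
  qed
  have "(\<alpha> * t + c / t) - (\<alpha> * p + c / p) = (t - p) * (\<alpha> * t * p - c) / (t * p)"
    using p0 by (simp add: field_simps)
  also have "\<dots> \<ge> 0" using key p0 by simp
  finally show ?thesis unfolding p_def s_def by simp
qed

lemma main_ineq:
  fixes G11 G12 G21 G22 e1 e2 p1 p2 :: real
  assumes G: "G11 > 0" "G12 \<ge> G11" "G21 \<ge> G11" "G22 - G12 - G21 + G11 \<ge> 0"
    and e: "0 < e1" "e1 \<le> 1" "0 < e2" "e2 \<le> 1"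
    and p: "e1 \<le> p1" "p1 \<le> 1" "e2 \<le> p2" "p2 \<le> 1"
  defines "p \<equiv> min 1 (max e1 (max e2 (sqrt (e1 * e2 * (G22 - G12 - G21 + G11) / G11))))"
  defines "c \<equiv> G22 - G12 - G21 + G11"
  shows "(G11 * (p/e1) * (p/e2) + (G12 - G11) * (p/e1) + (G21 - G11) * (p/e2) + c) / p
       \<le> (G11 * (p1/e1) * (p2/e2) + (G12 - G11) * (p1/e1) + (G21 - G11) * (p2/e2) + c) / min p1 p2"
proof -
  define \<alpha> where "\<alpha> = G11 / (e1 * e2)"
  define E where "E = max e1 e2"
  have a0: "\<alpha> > 0" unfolding \<alpha>_def using G e by simp
  have c0: "c \<ge> 0" unfolding c_def using G by simp
  have pp: "p = min 1 (max E (sqrt (c / \<alpha>)))"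
  proof -
    have "e1 * e2 * (G22 - G12 - G21 + G11) / G11 = c / \<alpha>" unfolding c_def \<alpha>_def by simp
    thus ?thesis unfolding p_def E_def by (simp add: max.assoc)
  qed
  have pos: "p > 0" using pp e unfolding E_def by auto
  have L: "(G11 * (p/e1) * (p/e2) + (G12 - G11) * (p/e1) + (G21 - G11) * (p/e2) + c) / p
      = \<alpha> * p + c / p + ((G12 - G11) / e1 + (G21 - G11) / e2)"
    using pos e unfolding \<alpha>_def by (simp add: field_simps)
  have R: "\<alpha> * t + c / t + ((G12 - G11) / e1 + (G21 - G11) / e2)
      \<le> (G11 * (p1/e1) * (p2/e2) + (G12 - G11) * (p1/e1) + (G21 - G11) * (p2/e2) + c) / min p1 p2"
    if "t = max p1 p2" for t
  proof (cases "p1 \<le> p2")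
    case True
    have Z: "((G21 - G11) * (p2/e2) + c) / p2 \<le> ((G21 - G11) * (p2/e2) + c) / p1"
      using True p e G c0 by (intro divide_left_mono) auto
    have "(G11 * (p1/e1) * (p2/e2) + (G12 - G11) * (p1/e1) + (G21 - G11) * (p2/e2) + c) / min p1 p2
       = \<alpha> * p2 + (G12 - G11) / e1 + ((G21 - G11) * (p2/e2) + c) / p1"
      using True p e unfolding \<alpha>_def by (simp add: field_simps min_def)
    moreover have "((G21 - G11) * (p2/e2) + c) / p2 = (G21 - G11) / e2 + c / p2"
      using p e by (simp add: field_simps)
    ultimately show ?thesis using Z True that by (simp add: max_def)
  next
    case False
    have Z: "((G12 - G11) * (p1/e1) + c) / p1 \<le> ((G12 - G11) * (p1/e1) + c) / p2"
      using False p e G c0 by (intro divide_left_mono) auto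
    have "(G11 * (p1/e1) * (p2/e2) + (G12 - G11) * (p1/e1) + (G21 - G11) * (p2/e2) + c) / min p1 p2
       = \<alpha> * p1 + (G21 - G11) / e2 + ((G12 - G11) * (p1/e1) + c) / p2"
      using False p e unfolding \<alpha>_def by (simp add: field_simps min_def)
    moreover have "((G12 - G11) * (p1/e1) + c) / p1 = (G12 - G11) / e1 + c / p1"
      using p e by (simp add: field_simps)
    ultimately show ?thesis using Z False that by (simp add: max_def)
  qed
  have "\<alpha> * p + c / p \<le> \<alpha> * max p1 p2 + c / max p1 p2"
  proof -
    have h1: "0 < E" "E \<le> 1" "E \<le> max p1 p2" "max p1 p2 \<le> 1" using e p unfolding E_def by auto
    show ?thesis unfolding pp by (rule phi_min[OF a0 c0 h1])
  qed
  thus ?thesis using L R[OF refl] by linarith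
qed


lemma var_formula:
  fixes a b :: "'u::finite \<Rightarrow> nat"
  assumes p: "0 < p1" "p1 \<le> 1" "0 < p2" "p2 \<le> 1" and q: "0 < q1" "q1 \<le> 1" "0 < q2" "q2 \<le> 1"
  shows "var_J_count a b p1 q1 p2 q2 =
    (\<Sum>v\<in>UNIV. (real (a v) * (1/q1) + (real (a v))\<^sup>2 - real (a v)) * (real (b v) * (1/q2) + (real (b v))\<^sup>2 - real (b v)))
      / min p1 p2 - gamma a b 2 2"
proof -
  define m where "m = min p1 p2"
  have m: "0 < m" "m \<le> 1" using p by (auto simp: m_def)
  define M where "M = ubs_space a b q1 q2"
  have M_eq: "M = MH \<Otimes>\<^sub>M (MB a q1 \<Otimes>\<^sub>M MB b q2)" by (simp add: M_def ubs_space_def)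
  interpret P: prob_space M unfolding M_eq by (intro prob_space_pair probMH probMB)
  define T where "T v \<omega> = of_bool (fst \<omega> v < m) * (CA a v (fst (snd \<omega>)) * CA b v (snd (snd \<omega>)))"
    for v and \<omega> :: "('u \<Rightarrow> real) \<times> ('u \<times> nat \<Rightarrow> bool) \<times> ('u \<times> nat \<Rightarrow> bool)"
  define X where "X \<omega> = (\<Sum>v\<in>UNIV. T v \<omega>)" for \<omega>
  have J: "J_count a b p1 q1 p2 q2 = (\<lambda>\<omega>. X \<omega> / (m * q1 * q2))"
    unfolding J_eq X_def T_def m_def ..
  have bH: "\<bar>of_bool (h v < m) :: real\<bar> \<le> 1" for h :: "'u \<Rightarrow> real" and v by simp
  have bHH: "\<bar>of_bool (h v < m) * of_bool (h w < m) :: real\<bar> \<le> 1" for h :: "'u \<Rightarrow> real" and v w by simp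
  have mHH: "(\<lambda>h. of_bool (h v < m) * of_bool (h w < m) :: real) \<in> borel_measurable (MH::('u \<Rightarrow> real) measure)" for v w
    by (rule borel_measurable_times[OF meas_H meas_H])
  have bCC: "\<bar>CA a' v c * CA a' w c\<bar> \<le> real (a' v) * real (a' w)" for a' :: "'u \<Rightarrow> nat" and v w c
  proof -
    have "\<bar>CA a' v c\<bar> * \<bar>CA a' w c\<bar> \<le> real (a' v) * real (a' w)"
      by (rule mult_mono[OF bd_CA bd_CA]) simp_all
    thus ?thesis by (simp add: abs_mult)
  qed
  have mCC: "(\<lambda>c. CA a' v c * CA a' w c) \<in> borel_measurable (MB a' q)" for a' :: "'u \<Rightarrow> nat" and v w q
    by (rule borel_measurable_times[OF meas_CA meas_CA])
  have iT: "integrable M (T v)" and ET: "integral\<^sup>L M (T v) = m * (real (a v) * q1 * (real (b v) * q2))" for v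
  proof -
    note r = triple_int[where f="\<lambda>h. of_bool (h v < m)" and g="CA a v" and k="CA b v"
        and A=MH and B="MB a q1" and C="MB b q2" and Bf=1, OF probMH probMB probMB meas_H _ meas_CA bd_CA meas_CA bd_CA]
    show "integrable M (T v)" unfolding M_eq T_def by (rule r(1)) simp
    have "integral\<^sup>L M (T v) = (\<integral>h. of_bool (h v < m) \<partial>MH) * ((\<integral>c. CA a v c \<partial>MB a q1) * (\<integral>c. CA b v c \<partial>MB b q2))"
      unfolding M_eq T_def by (rule r(2)) simp
    thus "integral\<^sup>L M (T v) = m * (real (a v) * q1 * (real (b v) * q2))"
      by (simp add: EH1[OF m] EC1 q less_imp_le)
  qed
  have TT: "T v \<omega> * T w \<omega> = (of_bool (fst \<omega> v < m) * of_bool (fst \<omega> w < m)) *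
      ((CA a v (fst (snd \<omega>)) * CA a w (fst (snd \<omega>))) * (CA b v (snd (snd \<omega>)) * CA b w (snd (snd \<omega>))))" for v w \<omega>
    unfolding T_def by (simp only: mult_ac)
  have iTT: "integrable M (\<lambda>\<omega>. T v \<omega> * T w \<omega>)"
    and ETT: "(\<integral>\<omega>. T v \<omega> * T w \<omega> \<partial>M) = (if v = w then m else m\<^sup>2) *
       ((if v = w then real (a v) * (real (a v) * q1\<^sup>2 + q1 - q1\<^sup>2) else real (a v) * real (a w) * q1\<^sup>2) *
        (if v = w then real (b v) * (real (b v) * q2\<^sup>2 + q2 - q2\<^sup>2) else real (b v) * real (b w) * q2\<^sup>2))" for v w
  proof -
    note r = triple_int[where f="\<lambda>h. of_bool (h v < m) * of_bool (h w < m)" and g="\<lambda>c. CA a v c * CA a w c"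
        and k="\<lambda>c. CA b v c * CA b w c"
        and A=MH and B="MB a q1" and C="MB b q2" and Bf=1, OF probMH probMB probMB mHH _ mCC bCC mCC bCC]
    show "integrable M (\<lambda>\<omega>. T v \<omega> * T w \<omega>)" unfolding M_eq TT by (rule r(1)) simp
    have "(\<integral>\<omega>. T v \<omega> * T w \<omega> \<partial>M) = (\<integral>h. of_bool (h v < m) * of_bool (h w < m) \<partial>MH) *
       ((\<integral>c. CA a v c * CA a w c \<partial>MB a q1) * (\<integral>c. CA b v c * CA b w c \<partial>MB b q2))"
      unfolding M_eq TT by (rule r(2)) simp
    thus "(\<integral>\<omega>. T v \<omega> * T w \<omega> \<partial>M) = (if v = w then m else m\<^sup>2) *
       ((if v = w then real (a v) * (real (a v) * q1\<^sup>2 + q1 - q1\<^sup>2) else real (a v) * real (a w) * q1\<^sup>2) *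
        (if v = w then real (b v) * (real (b v) * q2\<^sup>2 + q2 - q2\<^sup>2) else real (b v) * real (b w) * q2\<^sup>2))"
      by (simp only: EH[OF m] EC q less_imp_le)
  qed
  have XX: "(\<lambda>\<omega>. (X \<omega>)\<^sup>2) = (\<lambda>\<omega>. \<Sum>v\<in>UNIV. \<Sum>w\<in>UNIV. T v \<omega> * T w \<omega>)"
    by (rule ext) (simp only: X_def power2_eq_square sum_product)
  have iX: "integrable M X" unfolding X_def[abs_def]
    by (rule Bochner_Integration.integrable_sum) (rule iT)
  have iX2: "integrable M (\<lambda>\<omega>. (X \<omega>)\<^sup>2)" unfolding XX
    by (rule Bochner_Integration.integrable_sum, rule Bochner_Integration.integrable_sum) (rule iTT)
  have EX: "P.expectation X = (\<Sum>v\<in>UNIV. m * (real (a v) * q1 * (real (b v) * q2)))"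
    unfolding X_def[abs_def] by (simp only: Bochner_Integration.integral_sum[OF iT] ET)
  define Y where "Y v = m * (real (a v) * q1 * (real (b v) * q2))" for v
  define D where "D v = m * (real (a v) * (real (a v) * q1\<^sup>2 + q1 - q1\<^sup>2)) * (real (b v) * (real (b v) * q2\<^sup>2 + q2 - q2\<^sup>2)) - (Y v)\<^sup>2" for v
  have Pvw: "(\<integral>\<omega>. T v \<omega> * T w \<omega> \<partial>M) = Y v * Y w + (if v = w then D v else 0)" for v w
    unfolding ETT by (cases "v = w") (simp_all add: D_def Y_def power2_eq_square algebra_simps)
  have EX2: "P.expectation (\<lambda>\<omega>. (X \<omega>)\<^sup>2) = (\<Sum>v\<in>UNIV. Y v)\<^sup>2 + (\<Sum>v\<in>UNIV. D v)"
  proof -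
    have "P.expectation (\<lambda>\<omega>. (X \<omega>)\<^sup>2) = (\<Sum>v\<in>UNIV. \<Sum>w\<in>UNIV. (\<integral>\<omega>. T v \<omega> * T w \<omega> \<partial>M))"
      unfolding XX by (simp only: Bochner_Integration.integral_sum[OF Bochner_Integration.integrable_sum[OF iTT]]
          Bochner_Integration.integral_sum[OF iTT])
    also have "\<dots> = (\<Sum>v\<in>UNIV. \<Sum>w\<in>UNIV. Y v * Y w) + (\<Sum>v\<in>UNIV. \<Sum>w\<in>UNIV. (if v = w then D v else 0))"
      by (simp only: Pvw sum.distrib)
    also have "\<dots> = (\<Sum>v\<in>UNIV. Y v)\<^sup>2 + (\<Sum>v\<in>UNIV. D v)"
      by (simp add: power2_eq_square sum_product)
    finally show ?thesis .
  qed
  have VX: "P.variance X = (\<Sum>v\<in>UNIV. D v)"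
    using P.variance_eq[OF iX iX2] EX EX2 unfolding Y_def by simp
  have "var_J_count a b p1 q1 p2 q2 = P.variance X / (m * q1 * q2)\<^sup>2"
    unfolding var_J_count_def M_def[symmetric] J by (rule P.variance_div)
  also have "\<dots> = (\<Sum>v\<in>UNIV. D v / (m * q1 * q2)\<^sup>2)" unfolding VX by (rule sum_divide_distrib)
  also have "\<dots> = (\<Sum>v\<in>UNIV. (real (a v) * (1/q1) + (real (a v))\<^sup>2 - real (a v)) * (real (b v) * (1/q2) + (real (b v))\<^sup>2 - real (b v)) / m
       - (real (a v))^2 * (real (b v))^2)"
  proof (rule sum.cong[OF refl])
    fix v
    show "D v / (m * q1 * q2)\<^sup>2 = (real (a v) * (1/q1) + (real (a v))\<^sup>2 - real (a v)) * (real (b v) * (1/q2) + (real (b v))\<^sup>2 - real (b v)) / m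
       - (real (a v))^2 * (real (b v))^2"
      unfolding D_def Y_def using m q by (simp add: field_simps power2_eq_square)
  qed
  also have "\<dots> = (\<Sum>v\<in>UNIV. (real (a v) * (1/q1) + (real (a v))\<^sup>2 - real (a v)) * (real (b v) * (1/q2) + (real (b v))\<^sup>2 - real (b v)))
      / min p1 p2 - gamma a b 2 2"
    by (simp add: sum_subtractf sum_divide_distrib gamma_def m_def power_mult_distrib)
  finally show ?thesis .
qed


lemma nat_le_sq: "real n \<le> (real n)\<^sup>2"
  by (cases n) (auto simp: power2_eq_square)

lemma nat_le_sq': "(n::nat) \<le> n\<^sup>2"
  by (cases n) (auto simp: power2_eq_square)

theorem theorem5:
  fixes a b :: "'u::finite \<Rightarrow> nat" and eps1 eps2 :: real
  assumes "gamma a b 1 1 > 0"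
    and "0 < eps1" "eps1 \<le> 1" "0 < eps2" "eps2 \<le> 1"
  defines "p \<equiv> min 1 (max eps1 (max eps2
              (sqrt (eps1 * eps2 * (gamma a b 2 2 - gamma a b 1 2 - gamma a b 2 1 + gamma a b 1 1)
                     / gamma a b 1 1))))"
  shows "\<forall>p1 q1 p2 q2. 0 < p1 \<and> p1 \<le> 1 \<and> 0 < q1 \<and> q1 \<le> 1 \<and> 0 < p2 \<and> p2 \<le> 1 \<and>
            0 < q2 \<and> q2 \<le> 1 \<and> p1 * q1 = eps1 \<and> p2 * q2 = eps2 \<longrightarrow>
           var_J_count a b p (eps1 / p) p (eps2 / p) \<le> var_J_count a b p1 q1 p2 q2"
proof (intro allI impI)
  fix p1 q1 p2 q2 :: real
  assume h: "0 < p1 \<and> p1 \<le> 1 \<and> 0 < q1 \<and> q1 \<le> 1 \<and> 0 < p2 \<and> p2 \<le> 1 \<and>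
            0 < q2 \<and> q2 \<le> 1 \<and> p1 * q1 = eps1 \<and> p2 * q2 = eps2"
  define G11 where "G11 = gamma a b 1 1"
  define G12 where "G12 = gamma a b 1 2"
  define G21 where "G21 = gamma a b 2 1"
  define G22 where "G22 = gamma a b 2 2"
  have G1: "G11 > 0" using assms(1) unfolding G11_def .
  have G2: "G12 \<ge> G11"
  proof -
    have "G12 - G11 = (\<Sum>v\<in>UNIV. real (a v) * ((real (b v))\<^sup>2 - real (b v)))"
      unfolding G12_def G11_def gamma_def by (simp add: sum_subtractf[symmetric] algebra_simps)
    also have "\<dots> \<ge> 0" by (intro sum_nonneg mult_nonneg_nonneg) (simp_all add: nat_le_sq nat_le_sq')
    finally show ?thesis by simp
  qed
  have G3: "G21 \<ge> G11"
  proof -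
    have "G21 - G11 = (\<Sum>v\<in>UNIV. real (b v) * ((real (a v))\<^sup>2 - real (a v)))"
      unfolding G21_def G11_def gamma_def by (simp add: sum_subtractf[symmetric] algebra_simps)
    also have "\<dots> \<ge> 0" by (intro sum_nonneg mult_nonneg_nonneg) (simp_all add: nat_le_sq nat_le_sq')
    finally show ?thesis by simp
  qed
  have G4: "G22 - G12 - G21 + G11 \<ge> 0"
  proof -
    have "G22 - G12 - G21 + G11 = (\<Sum>v\<in>UNIV. (real (a v) * 0 + (real (a v))\<^sup>2 - real (a v)) * (real (b v) * 0 + (real (b v))\<^sup>2 - real (b v)))"
      unfolding sum_gamma G11_def G12_def G21_def G22_def by simp
    also have "\<dots> \<ge> 0" by (intro sum_nonneg mult_nonneg_nonneg) (simp_all add: nat_le_sq nat_le_sq')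
    finally show ?thesis .
  qed
  have e1p1: "eps1 \<le> p1" using h mult_left_le[of q1 p1] by auto
  have e2p2: "eps2 \<le> p2" using h mult_left_le[of q2 p2] by auto
  have pe: "eps1 \<le> p" "eps2 \<le> p" "p \<le> 1" "0 < p" using assms(2-5) unfolding p_def by auto
  have pG: "p = min 1 (max eps1 (max eps2 (sqrt (eps1 * eps2 * (G22 - G12 - G21 + G11) / G11))))"
    unfolding p_def G11_def G12_def G21_def G22_def ..
  have q1': "1 / q1 = p1 / eps1" using h by (auto simp: field_simps)
  have q2': "1 / q2 = p2 / eps2" using h by (auto simp: field_simps)
  have L: "var_J_count a b p (eps1 / p) p (eps2 / p) =
     (G11 * (p/eps1) * (p/eps2) + (G12 - G11) * (p/eps1) + (G21 - G11) * (p/eps2) + (G22 - G12 - G21 + G11)) / p - G22"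
  proof -
    have "var_J_count a b p (eps1 / p) p (eps2 / p) =
      (\<Sum>v\<in>UNIV. (real (a v) * (1/(eps1/p)) + (real (a v))\<^sup>2 - real (a v)) * (real (b v) * (1/(eps2/p)) + (real (b v))\<^sup>2 - real (b v)))
      / min p p - gamma a b 2 2"
      by (rule var_formula) (use pe assms(2-5) in auto)
    thus ?thesis unfolding sum_gamma G11_def G12_def G21_def G22_def by simp
  qed
  have R: "var_J_count a b p1 q1 p2 q2 =
     (G11 * (p1/eps1) * (p2/eps2) + (G12 - G11) * (p1/eps1) + (G21 - G11) * (p2/eps2) + (G22 - G12 - G21 + G11)) / min p1 p2 - G22"
  proof -
    have "var_J_count a b p1 q1 p2 q2 =
      (\<Sum>v\<in>UNIV. (real (a v) * (1/q1) + (real (a v))\<^sup>2 - real (a v)) * (real (b v) * (1/q2) + (real (b v))\<^sup>2 - real (b v)))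
      / min p1 p2 - gamma a b 2 2"
      by (rule var_formula) (use h in auto)
    thus ?thesis unfolding sum_gamma G11_def G12_def G21_def G22_def q1' q2' .
  qed
  have "(G11 * (p/eps1) * (p/eps2) + (G12 - G11) * (p/eps1) + (G21 - G11) * (p/eps2) + (G22 - G12 - G21 + G11)) / p
      \<le> (G11 * (p1/eps1) * (p2/eps2) + (G12 - G11) * (p1/eps1) + (G21 - G11) * (p2/eps2) + (G22 - G12 - G21 + G11)) / min p1 p2"
    unfolding pG by (rule main_ineq[OF G1 G2 G3 G4 assms(2-5) e1p1 _ e2p2]) (use h in auto)
  thus "var_J_count a b p (eps1 / p) p (eps2 / p) \<le> var_J_count a b p1 q1 p2 q2"
    unfolding L R by simp
qed

end
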